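(* Let $K$ be a field, $P=K[x_1,\dots,x_n]$, $\sigma$ a term ordering on $\mathbb{T}^n$, and let $I,J$ be ideals in $P$. If $I\subsetneq J$ then $O_\sigma(J)\prec_\sigma O_\sigma(I)$.
   Context: $\mathbb{T}^n$ is the monoid of power-products in $x_1,\dots,x_n$. A tuple $(t_1,\dots,t_r)$ of distinct power-products is $\sigma$-ordered if $t_1<_\sigma\cdots<_\sigma t_r$ (the empty tuple is $\sigma$-ordered). For an ideal $I$, $O_\sigma(I)$ is the $\sigma$-ordered tuple of the leading terms of a minimal $\sigma$-Gröbner basis of $I$ (equivalently, the minimal power-product generators of $\mathrm{LT}_\sigma(I)$ in increasing $\sigma$-order); it is the empty tuple if $I=0$. For $\sigma$-ordered tuples $T=(t_1,\dots,t_r)$ and $T'=(t'_1,\dots,t'_{r'})$, $T'\prec_\sigma T$ means either $T$ is a proper prefix of $T'$ (i.e. $r<r'$ and $t_i=t'_i$ for $i\le r$), or there is $k\le\min(r,r')$ with $t_i=t'_i$ for $i<k$ and $t'_k<_\sigma t_k$. *)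

theory Defs
  imports Main "HOL-Library.Poly_Mapping"
begin

(* Power-products in the variables x_0,...,x_{n-1}: exponent vectors
  (nat \<Rightarrow>\<^sub>0 nat) whose support lies in {..<n}; multiplication of
  power-products is addition of exponent vectors, 1 is 0.
  Polynomials over a field 'a are finitely supported maps from power-products
  to coefficients, with the convolution product of Poly_Mapping. *)

type_synonym pp = "nat \<Rightarrow>\<^sub>0 nat"
type_synonym 'a mpoly = "pp \<Rightarrow>\<^sub>0 'a"

definition Tn :: "nat \<Rightarrow> pp set" where
  "Tn n = {t. Poly_Mapping.keys t \<subseteq> {..<n}}"

definition Pn :: "nat \<Rightarrow> ('a::zero) mpoly set" where
  "Pn n = {f. Poly_Mapping.keys f \<subseteq> Tn n}"

definition pp_dvd :: "pp \<Rightarrow> pp \<Rightarrow> bool" where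
  "pp_dvd s t \<longleftrightarrow> (\<forall>i. Poly_Mapping.lookup s i \<le> Poly_Mapping.lookup t i)"

definition term_ordering :: "nat \<Rightarrow> (pp \<Rightarrow> pp \<Rightarrow> bool) \<Rightarrow> bool" where
  "term_ordering n lt \<longleftrightarrow>
     (\<forall>s t. lt s t \<longrightarrow> s \<in> Tn n \<and> t \<in> Tn n) \<and>
     (\<forall>t \<in> Tn n. \<not> lt t t) \<and>
     (\<forall>s \<in> Tn n. \<forall>t \<in> Tn n. \<forall>u \<in> Tn n. lt s t \<longrightarrow> lt t u \<longrightarrow> lt s u) \<and>
     (\<forall>s \<in> Tn n. \<forall>t \<in> Tn n. s = t \<or> lt s t \<or> lt t s) \<and>
     (\<forall>s \<in> Tn n. \<forall>t \<in> Tn n. \<forall>u \<in> Tn n. lt s t \<longrightarrow> lt (s + u) (t + u)) \<and>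
     (\<forall>t \<in> Tn n. t = 0 \<or> lt 0 t)"

definition is_ideal :: "nat \<Rightarrow> ('a::comm_ring_1) mpoly set \<Rightarrow> bool" where
  "is_ideal n I \<longleftrightarrow> I \<subseteq> Pn n \<and> 0 \<in> I \<and>
     (\<forall>f \<in> I. \<forall>g \<in> I. f + g \<in> I) \<and>
     (\<forall>f \<in> I. \<forall>g \<in> Pn n. g * f \<in> I)"

definition LT :: "(pp \<Rightarrow> pp \<Rightarrow> bool) \<Rightarrow> ('a::zero) mpoly \<Rightarrow> pp" where
  "LT lt f = (THE t. t \<in> Poly_Mapping.keys f \<and> (\<forall>s \<in> Poly_Mapping.keys f. s = t \<or> lt s t))"

(* Power-products in LT_sigma(I) (the leading terms of nonzero elements of I). *)
definition LTs :: "(pp \<Rightarrow> pp \<Rightarrow> bool) \<Rightarrow> ('a::zero) mpoly set \<Rightarrow> pp set" where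
  "LTs lt I = {LT lt f | f. f \<in> I \<and> f \<noteq> 0}"

definition min_gens :: "(pp \<Rightarrow> pp \<Rightarrow> bool) \<Rightarrow> ('a::zero) mpoly set \<Rightarrow> pp set" where
  "min_gens lt I = {t \<in> LTs lt I. \<forall>s \<in> LTs lt I. pp_dvd s t \<longrightarrow> s = t}"

definition O_sigma :: "(pp \<Rightarrow> pp \<Rightarrow> bool) \<Rightarrow> ('a::zero) mpoly set \<Rightarrow> pp list" where
  "O_sigma lt I = (THE xs. sorted_wrt lt xs \<and> set xs = min_gens lt I)"

definition tuple_prec :: "(pp \<Rightarrow> pp \<Rightarrow> bool) \<Rightarrow> pp list \<Rightarrow> pp list \<Rightarrow> bool" where
  "tuple_prec lt T' T \<longleftrightarrow>
     (length T < length T' \<and> take (length T) T' = T) \<or>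
     (\<exists>k < min (length T) (length T'). take k T' = take k T \<and> lt (T' ! k) (T ! k))"

end

theory Submission
  imports Defs
begin

lemma to_in: assumes "term_ordering n lt" "lt s t" shows "s \<in> Tn n \<and> t \<in> Tn n"
proof -
  have A: "\<forall>s t. lt s t \<longrightarrow> s \<in> Tn n \<and> t \<in> Tn n" using assms(1)[unfolded term_ordering_def] by argo
  show ?thesis using A assms(2) by blast
qed
lemma to_irrefl: assumes "term_ordering n lt" shows "\<not> lt t t"
proof
  assume h: "lt t t"
  have "\<forall>t \<in> Tn n. \<not> lt t t" using assms(1)[unfolded term_ordering_def] by argo
  then show False using h to_in[OF assms h] by blast
qed
lemma to_trans: assumes "term_ordering n lt" "lt s t" "lt t u" shows "lt s u"
proof -
  have A: "\<forall>s\<in>Tn n. \<forall>t\<in>Tn n. \<forall>u\<in>Tn n. lt s t \<longrightarrow> lt t u \<longrightarrow> lt s u"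
    using assms(1)[unfolded term_ordering_def] by argo
  have "s \<in> Tn n" "t \<in> Tn n" "u \<in> Tn n" using to_in[OF assms(1) assms(2)] to_in[OF assms(1) assms(3)] by auto
  then show ?thesis using A assms(2,3) by blast
qed
lemma to_total: assumes "term_ordering n lt" "s \<in> Tn n" "t \<in> Tn n" shows "s = t \<or> lt s t \<or> lt t s"
proof -
  have A: "\<forall>s \<in> Tn n. \<forall>t \<in> Tn n. s = t \<or> lt s t \<or> lt t s" using assms(1)[unfolded term_ordering_def] by argo
  show ?thesis using A assms(2,3) by blast
qed
lemma to_mono: assumes "term_ordering n lt" "lt s t" "u \<in> Tn n" shows "lt (s + u) (t + u)"
proof -
  have A: "\<forall>s \<in> Tn n. \<forall>t \<in> Tn n. \<forall>u \<in> Tn n. lt s t \<longrightarrow> lt (s + u) (t + u)"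
    using assms(1)[unfolded term_ordering_def] by argo
  have "s \<in> Tn n" "t \<in> Tn n" using to_in[OF assms(1) assms(2)] by auto
  then show ?thesis using A assms(2,3) by blast
qed
lemma to_zero: assumes "term_ordering n lt" "t \<in> Tn n" shows "t = 0 \<or> lt 0 t"
proof -
  have A: "\<forall>t \<in> Tn n. t = 0 \<or> lt 0 t" using assms(1)[unfolded term_ordering_def] by argo
  show ?thesis using A assms(2) by blast
qed

lemma Tn_add: "s \<in> Tn n \<Longrightarrow> t \<in> Tn n \<Longrightarrow> s + t \<in> Tn n"
  using keys_add[of s t] unfolding Tn_def by auto

lemma finite_max:
  assumes to: "term_ordering n lt"
  shows "finite X \<Longrightarrow> X \<noteq> {} \<Longrightarrow> X \<subseteq> Tn n \<Longrightarrow> \<exists>t\<in>X. \<forall>s\<in>X. s = t \<or> lt s t"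
proof (induction X rule: finite_ne_induct)
  case (singleton x) then show ?case by auto
next
  case (insert x F)
  then obtain t where t: "t \<in> F" "\<forall>s\<in>F. s = t \<or> lt s t" by auto
  have "t \<in> Tn n" using insert.prems t(1) by auto
  then have "x = t \<or> lt x t \<or> lt t x" using to_total[OF to, of x t] insert.prems by auto
  then show ?case
  proof (elim disjE)
    assume "lt t x"
    then have "\<forall>s\<in>insert x F. s = x \<or> lt s x" using t to_trans[OF to, of _ t x] by auto
    then show ?thesis by blast
  qed (use t in auto)
qed

lemma finite_min:
  assumes to: "term_ordering n lt"
  shows "finite X \<Longrightarrow> X \<noteq> {} \<Longrightarrow> X \<subseteq> Tn n \<Longrightarrow> \<exists>t\<in>X. \<forall>s\<in>X. s = t \<or> lt t s"
proof (induction X rule: finite_ne_induct)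
  case (singleton x) then show ?case by auto
next
  case (insert x F)
  then obtain t where t: "t \<in> F" "\<forall>s\<in>F. s = t \<or> lt t s" by auto
  have "t \<in> Tn n" using insert.prems t(1) by auto
  then have "x = t \<or> lt x t \<or> lt t x" using to_total[OF to, of x t] insert.prems by auto
  then show ?case
  proof (elim disjE)
    assume "lt x t"
    then have "\<forall>s\<in>insert x F. s = x \<or> lt x s" using t to_trans[OF to, of x t] by auto
    then show ?thesis by blast
  qed (use t in auto)
qed

lemma LT_props:
  assumes to: "term_ordering n lt" and f: "f \<noteq> 0" "Poly_Mapping.keys f \<subseteq> Tn n"
  shows "LT lt f \<in> Poly_Mapping.keys f \<and> (\<forall>s\<in>Poly_Mapping.keys f. s = LT lt f \<or> lt s (LT lt f))"
proof -
  obtain t where t: "t \<in> Poly_Mapping.keys f" "\<forall>s\<in>Poly_Mapping.keys f. s = t \<or> lt s t"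
  proof -
    have "finite (Poly_Mapping.keys f)" by simp
    have "Poly_Mapping.keys f \<noteq> {}" using f by simp
    then show ?thesis using that \<open>finite (Poly_Mapping.keys f)\<close> finite_max[OF to, of "Poly_Mapping.keys f"] f by blast
  qed
  have "LT lt f = t" unfolding LT_def
  proof (rule the_equality)
    fix t' assume t': "t' \<in> Poly_Mapping.keys f \<and> (\<forall>s\<in>Poly_Mapping.keys f. s = t' \<or> lt s t')"
    then have "t = t' \<or> lt t t'" "t' = t \<or> lt t' t" using t by auto
    then show "t' = t" using to_trans[OF to, of t t' t] to_irrefl[OF to, of t] by blast
  qed (use t in auto)
  then show ?thesis using t by simp
qed

lemma LT_eqI:
  assumes to: "term_ordering n lt" and "t \<in> Poly_Mapping.keys f" "\<forall>s\<in>Poly_Mapping.keys f. s = t \<or> lt s t"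
  shows "LT lt f = t"
  unfolding LT_def
proof (rule the_equality)
  fix t' assume t': "t' \<in> Poly_Mapping.keys f \<and> (\<forall>s\<in>Poly_Mapping.keys f. s = t' \<or> lt s t')"
  then have "t = t' \<or> lt t t'" "t' = t \<or> lt t' t" using assms by auto
  then show "t' = t" using to_trans[OF to, of t t' t] to_irrefl[OF to, of t] by blast
qed (use assms in auto)

lemma lookup_single_mult_add:
  fixes f :: "('a::comm_semiring_1) mpoly" and c :: 'a
  shows "Poly_Mapping.lookup (Poly_Mapping.single u c * f) (u + s) = c * Poly_Mapping.lookup f s"
proof -
  have "(\<lambda>l::pp. Poly_Mapping.lookup (Poly_Mapping.single u c) l * (\<Sum>q. Poly_Mapping.lookup f q when u + s = l + q))
     = (\<lambda>l. (c * (\<Sum>q. Poly_Mapping.lookup f q when u + s = u + q)) when u = l)"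
    by (auto simp: lookup_single fun_eq_iff when_def)
  then have "Poly_Mapping.lookup (Poly_Mapping.single u c * f) (u + s) = c * (\<Sum>q. Poly_Mapping.lookup f q when u + s = u + q)"
    unfolding lookup_mult by (simp only:) simp
  also have "(\<lambda>q. Poly_Mapping.lookup f q when u + s = u + q) = (\<lambda>q. Poly_Mapping.lookup f q when s = q)"
    by (simp add: fun_eq_iff)
  finally show ?thesis by simp
qed

lemma lookup_single_mult_not:
  fixes f :: "('a::comm_semiring_1) mpoly" and c :: 'a
  assumes "\<not> (\<exists>s. k = u + s)"
  shows "Poly_Mapping.lookup (Poly_Mapping.single u c * f) k = 0"
proof -
  have "(\<lambda>l::pp. Poly_Mapping.lookup (Poly_Mapping.single u c) l * (\<Sum>q. Poly_Mapping.lookup f q when k = l + q))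
     = (\<lambda>l. (c * (\<Sum>q. Poly_Mapping.lookup f q when k = u + q)) when u = l)"
    by (auto simp: lookup_single fun_eq_iff when_def)
  moreover have "(\<lambda>q. Poly_Mapping.lookup f q when k = u + q) = (\<lambda>q. 0)"
    using assms by (auto simp: fun_eq_iff)
  ultimately show ?thesis unfolding lookup_mult by (simp only:) simp
qed


lemma pp_dvd_antisym_eq: "pp_dvd s t \<Longrightarrow> pp_dvd t s \<Longrightarrow> s = t"
  unfolding pp_dvd_def by (rule poly_mapping_eqI) (meson le_antisym)

lemma dickson:
  "finite V \<Longrightarrow> S \<subseteq> {t. Poly_Mapping.keys t \<subseteq> V} \<Longrightarrow>
   \<forall>s\<in>S. \<forall>t\<in>S. pp_dvd s t \<longrightarrow> s = t \<Longrightarrow> finite S"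
proof (induction V arbitrary: S rule: finite_psubset_induct)
  case (psubset V)
  show ?case
  proof (cases "S = {}")
    case False
    then obtain a where a: "a \<in> S" by auto
    define Z where "Z i c = {s\<in>S. Poly_Mapping.lookup s i = c}" for i c
    have cover: "S \<subseteq> insert a (\<Union>i\<in>V. \<Union>c\<in>{..<Poly_Mapping.lookup a i}. Z i c)"
    proof
      fix s assume s: "s \<in> S"
      show "s \<in> insert a (\<Union>i\<in>V. \<Union>c\<in>{..<Poly_Mapping.lookup a i}. Z i c)"
      proof (rule ccontr)
        assume nn: "s \<notin> insert a (\<Union>i\<in>V. \<Union>c\<in>{..<Poly_Mapping.lookup a i}. Z i c)"
        have le: "Poly_Mapping.lookup a i \<le> Poly_Mapping.lookup s i" for i
        proof (cases "i \<in> V")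
          case True
          then show ?thesis using nn s unfolding Z_def by (auto simp: not_le[symmetric])
        next
          case False
          then have "i \<notin> Poly_Mapping.keys a" using a psubset.prems(1) by auto
          then show ?thesis by (simp add: in_keys_iff)
        qed
        then have "pp_dvd a s" unfolding pp_dvd_def by auto
        then have "a = s" using psubset.prems(2) a s by blast
        then show False using nn by auto
      qed
    qed
    have fin: "finite (Z i c)" if iV: "i \<in> V" for i c
    proof -
      define g where "g s = s - Poly_Mapping.single i c" for s :: pp
      have lg: "Poly_Mapping.lookup (g s) j = (if j = i then Poly_Mapping.lookup s j - c else Poly_Mapping.lookup s j)" for s j
        by (simp add: g_def lookup_minus lookup_single when_def)
      have eq_of: "s = t" if "s \<in> Z i c" "t \<in> Z i c" "\<forall>j. j \<noteq> i \<longrightarrow> Poly_Mapping.lookup s j = Poly_Mapping.lookup t j" for s t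
        using that unfolding Z_def by (intro poly_mapping_eqI) (metis (mono_tags, lifting) mem_Collect_eq)
      have inj: "inj_on g (Z i c)"
      proof (rule inj_onI)
        fix s t assume st: "s \<in> Z i c" "t \<in> Z i c" "g s = g t"
        have "\<forall>j. j \<noteq> i \<longrightarrow> Poly_Mapping.lookup s j = Poly_Mapping.lookup t j"
          using st(3) lg by metis
        then show "s = t" using eq_of st(1,2) by blast
      qed
      have "finite (g ` Z i c)"
      proof (rule psubset.IH[of "V - {i}"])
        show "V - {i} \<subset> V" using iV by auto
        show "g ` Z i c \<subseteq> {t. Poly_Mapping.keys t \<subseteq> V - {i}}"
        proof (rule subsetI, elim imageE)
          fix y s assume ys: "y = g s" and s: "s \<in> Z i c"
          have "Poly_Mapping.keys (g s) \<subseteq> V - {i}"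
          proof
            fix x assume x: "x \<in> Poly_Mapping.keys (g s)"
            have sc: "Poly_Mapping.lookup s i = c" using s unfolding Z_def by auto
            have "Poly_Mapping.lookup (g s) x \<noteq> 0" using x by (simp add: in_keys_iff)
            then have "x \<noteq> i" "x \<in> Poly_Mapping.keys s" using lg[of s x] sc by (auto simp: in_keys_iff split: if_splits)
            moreover have "s \<in> S" using s unfolding Z_def by auto
            ultimately show "x \<in> V - {i}" using psubset.prems(1) by auto
          qed
          then show "y \<in> {t. Poly_Mapping.keys t \<subseteq> V - {i}}" using ys by simp
        qed
        show "\<forall>s\<in>g ` Z i c. \<forall>t\<in>g ` Z i c. pp_dvd s t \<longrightarrow> s = t"
        proof safe
          fix s t assume s: "s \<in> Z i c" and t: "t \<in> Z i c" and d: "pp_dvd (g s) (g t)"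
          have "Poly_Mapping.lookup s i = c" "Poly_Mapping.lookup t i = c" using s t unfolding Z_def by auto
          then have "pp_dvd s t" using d lg unfolding pp_dvd_def by (metis order_refl)
          moreover have "s \<in> S" "t \<in> S" using s t unfolding Z_def by auto
          ultimately show "g s = g t" using psubset.prems(2) by blast
        qed
      qed
      then show ?thesis using inj by (rule finite_imageD)
    qed
    have "finite (insert a (\<Union>i\<in>V. \<Union>c\<in>{..<Poly_Mapping.lookup a i}. Z i c))"
      using psubset.hyps fin by auto
    then show ?thesis using cover by (rule finite_subset[rotated])
  qed simp
qed


lemma mins_finite:
  assumes "X \<subseteq> Tn n"
  shows "finite {t\<in>X. \<forall>s\<in>X. pp_dvd s t \<longrightarrow> s = t}"
  by (rule dickson[of "{..<n}"]) (use assms in \<open>auto simp: Tn_def\<close>)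

definition deg :: "nat \<Rightarrow> pp \<Rightarrow> nat" where
  "deg n t = (\<Sum>i<n. Poly_Mapping.lookup t i)"

lemma min_below:
  assumes X: "X \<subseteq> Tn n" and x: "x \<in> X"
  shows "\<exists>m\<in>X. pp_dvd m x \<and> (\<forall>s\<in>X. pp_dvd s m \<longrightarrow> s = m)"
proof -
  define P where "P d = (d \<in> X \<and> pp_dvd d x)" for d
  define m where "m = arg_min (deg n) P"
  have "P x" unfolding P_def pp_dvd_def using x by auto
  then have m: "P m" "\<forall>y. P y \<longrightarrow> deg n m \<le> deg n y"
    unfolding m_def using arg_min_nat_lemma[of P x "deg n"] by auto
  have "\<forall>s\<in>X. pp_dvd s m \<longrightarrow> s = m"
  proof (intro ballI impI)
    fix s assume s: "s \<in> X" and d: "pp_dvd s m"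
    have "pp_dvd s x" unfolding pp_dvd_def
    proof
      fix i
      have "Poly_Mapping.lookup s i \<le> Poly_Mapping.lookup m i" using d unfolding pp_dvd_def by simp
      moreover have "Poly_Mapping.lookup m i \<le> Poly_Mapping.lookup x i" using m(1) unfolding P_def pp_dvd_def by simp
      ultimately show "Poly_Mapping.lookup s i \<le> Poly_Mapping.lookup x i" by (rule le_trans)
    qed
    then have "P s" using s unfolding P_def by simp
    then have dl: "deg n m \<le> deg n s" using m(2) by auto
    show "s = m"
    proof (rule ccontr)
      assume "s \<noteq> m"
      have "\<exists>i. Poly_Mapping.lookup s i \<noteq> Poly_Mapping.lookup m i"
      proof (rule ccontr)
        assume "\<not> (\<exists>i. Poly_Mapping.lookup s i \<noteq> Poly_Mapping.lookup m i)"
        then have "\<And>i. Poly_Mapping.lookup s i = Poly_Mapping.lookup m i" by simp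
        then have "s = m" by (rule poly_mapping_eqI)
        then show False using \<open>s \<noteq> m\<close> by simp
      qed
      then obtain i where i: "Poly_Mapping.lookup s i \<noteq> Poly_Mapping.lookup m i" by blast
      moreover have "Poly_Mapping.lookup s i \<le> Poly_Mapping.lookup m i" using d unfolding pp_dvd_def by simp
      ultimately have lt: "Poly_Mapping.lookup s i < Poly_Mapping.lookup m i" by simp
      then have "i \<in> Poly_Mapping.keys m" by (simp add: in_keys_iff)
      moreover have "m \<in> Tn n" using m(1) X unfolding P_def by auto
      ultimately have "i < n" unfolding Tn_def by auto
      then have "deg n s < deg n m" unfolding deg_def
        using lt d unfolding pp_dvd_def by (intro sum_strict_mono_ex1) auto
      then show False using dl by simp
    qed
  qed
  then show ?thesis using m(1) unfolding P_def by blast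
qed

lemma dvd_le:
  assumes to: "term_ordering n lt" and st: "s \<in> Tn n" "t \<in> Tn n" and d: "pp_dvd s t"
  shows "s = t \<or> lt s t"
proof -
  have eq: "t = (t - s) + s"
    by (rule poly_mapping_eqI) (use d in \<open>simp add: lookup_add lookup_minus pp_dvd_def\<close>)
  have "Poly_Mapping.keys (t - s) \<subseteq> Poly_Mapping.keys t"
    by (auto simp: in_keys_iff lookup_minus)
  then have "t - s \<in> Tn n" using st unfolding Tn_def by auto
  then have "t - s = 0 \<or> lt 0 (t - s)" by (rule to_zero[OF to])
  then show ?thesis
  proof
    assume "t - s = 0" then show ?thesis using eq by simp
  next
    assume "lt 0 (t - s)"
    then have "lt (0 + s) ((t - s) + s)" by (rule to_mono[OF to _ st(1)])
    then show ?thesis using eq by simp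
  qed
qed

lemma least_exists:
  assumes to: "term_ordering n lt" and X: "X \<subseteq> Tn n" "X \<noteq> {}"
  shows "\<exists>m\<in>X. \<forall>x\<in>X. m = x \<or> lt m x"
proof -
  define M where "M = {t\<in>X. \<forall>s\<in>X. pp_dvd s t \<longrightarrow> s = t}"
  have fM: "finite M" unfolding M_def using mins_finite[OF X(1)] .
  obtain x0 where "x0 \<in> X" using X by auto
  then have "M \<noteq> {}" using min_below[OF X(1)] unfolding M_def by blast
  moreover have "M \<subseteq> Tn n" using X unfolding M_def by auto
  ultimately obtain m where m: "m \<in> M" "\<forall>s\<in>M. s = m \<or> lt m s"
    using finite_min[OF to fM] by blast
  have "\<forall>x\<in>X. m = x \<or> lt m x"
  proof
    fix x assume x: "x \<in> X"
    then obtain m' where m': "m' \<in> M" "pp_dvd m' x" using min_below[OF X(1)] unfolding M_def by blast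
    have "m' = x \<or> lt m' x" using dvd_le[OF to _ _ m'(2)] m'(1) x X(1) unfolding M_def by auto
    moreover have "m' = m \<or> lt m m'" using m m'(1) by blast
    ultimately show "m = x \<or> lt m x" using to_trans[OF to, of m m' x] by blast
  qed
  then show ?thesis using m(1) unfolding M_def by blast
qed


lemma lookup_scalar:
  fixes f :: "('a::comm_semiring_1) mpoly" and a :: 'a
  shows "Poly_Mapping.lookup (Poly_Mapping.single 0 a * f) s = a * Poly_Mapping.lookup f s"
  using lookup_single_mult_add[of 0 a f s] by simp

lemma single_Pn: "u \<in> Tn n \<Longrightarrow> Poly_Mapping.single u c \<in> Pn n"
  unfolding Pn_def by auto

lemma zero_Tn: "0 \<in> Tn n"
  unfolding Tn_def by simp

lemma ideal_mult: "is_ideal n I \<Longrightarrow> f \<in> I \<Longrightarrow> g \<in> Pn n \<Longrightarrow> g * f \<in> I"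
  unfolding is_ideal_def by blast

lemma ideal_add: "is_ideal n I \<Longrightarrow> f \<in> I \<Longrightarrow> g \<in> I \<Longrightarrow> f + g \<in> I"
  unfolding is_ideal_def by blast

lemma ideal_zero: "is_ideal n I \<Longrightarrow> 0 \<in> I"
  unfolding is_ideal_def by blast

lemma ideal_keys: "is_ideal n I \<Longrightarrow> f \<in> I \<Longrightarrow> Poly_Mapping.keys f \<subseteq> Tn n"
  unfolding is_ideal_def Pn_def by blast

lemma LTs_Tn:
  assumes to: "term_ordering n lt" and I: "is_ideal n I"
  shows "LTs lt I \<subseteq> Tn n"
proof
  fix t assume "t \<in> LTs lt I"
  then obtain f where f: "f \<in> I" "f \<noteq> 0" "t = LT lt f" unfolding LTs_def by blast
  then show "t \<in> Tn n" using LT_props[OF to f(2) ideal_keys[OF I f(1)]] ideal_keys[OF I f(1)] by auto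
qed

lemma LTs_closed:
  fixes I :: "('a::field) mpoly set"
  assumes to: "term_ordering n lt" and I: "is_ideal n I" and t: "t \<in> LTs lt I" and u: "u \<in> Tn n"
  shows "u + t \<in> LTs lt I"
proof -
  obtain f where f: "f \<in> I" "f \<noteq> 0" "t = LT lt f" using t unfolding LTs_def by blast
  have kf: "Poly_Mapping.keys f \<subseteq> Tn n" using ideal_keys[OF I f(1)] .
  note LTf = LT_props[OF to f(2) kf]
  define g where "g = Poly_Mapping.single u (1::'a) * f"
  have gI: "g \<in> I" unfolding g_def using ideal_mult[OF I f(1) single_Pn[OF u]] .
  have "Poly_Mapping.lookup g (u + t) = Poly_Mapping.lookup f t"
    unfolding g_def using lookup_single_mult_add[of u 1 f t] by simp
  then have ut: "u + t \<in> Poly_Mapping.keys g" using LTf f(3) by (simp add: in_keys_iff)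
  have mx: "\<forall>k\<in>Poly_Mapping.keys g. k = u + t \<or> lt k (u + t)"
  proof
    fix k assume k: "k \<in> Poly_Mapping.keys g"
    have "\<exists>s. k = u + s"
    proof (rule ccontr)
      assume "\<not> (\<exists>s. k = u + s)"
      then have "Poly_Mapping.lookup g k = 0" unfolding g_def by (rule lookup_single_mult_not)
      then show False using k by (simp add: in_keys_iff)
    qed
    then obtain s where s: "k = u + s" by blast
    have "Poly_Mapping.lookup g k = Poly_Mapping.lookup f s"
      unfolding g_def s using lookup_single_mult_add[of u 1 f s] by simp
    then have "s \<in> Poly_Mapping.keys f" using k by (simp add: in_keys_iff)
    then have "s = t \<or> lt s t" using LTf f(3) by auto
    then show "k = u + t \<or> lt k (u + t)"
    proof
      assume "lt s t"
      then have "lt (s + u) (t + u)" by (rule to_mono[OF to _ u])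
      then show ?thesis using s by (simp add: add.commute)
    qed (use s in simp)
  qed
  have "LT lt g = u + t" by (rule LT_eqI[OF to ut mx])
  moreover have "g \<noteq> 0" using ut by auto
  ultimately show ?thesis using gI unfolding LTs_def mem_Collect_eq by (intro exI[of _ g]) simp
qed

lemma LTs_strict:
  fixes I J :: "('a::field) mpoly set"
  assumes to: "term_ordering n lt" and I: "is_ideal n I" and J: "is_ideal n J" and IJ: "I \<subset> J"
  shows "\<exists>t\<in>LTs lt J. t \<notin> LTs lt I"
proof (rule ccontr)
  assume "\<not> (\<exists>t\<in>LTs lt J. t \<notin> LTs lt I)"
  then have sub: "LTs lt J \<subseteq> LTs lt I" by blast
  define X where "X = {LT lt g | g. g \<in> J - I}"
  have nz: "g \<noteq> 0" if "g \<in> J - I" for g using that ideal_zero[OF I] by auto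
  have XT: "X \<subseteq> Tn n"
  proof
    fix x assume "x \<in> X"
    then obtain g where g: "g \<in> J - I" "x = LT lt g" unfolding X_def by blast
    have "x \<in> LTs lt J" using g nz[OF g(1)] unfolding LTs_def by blast
    then show "x \<in> Tn n" using LTs_Tn[OF to J] by blast
  qed
  obtain f0 where "f0 \<in> J - I" using IJ by blast
  then have "X \<noteq> {}" unfolding X_def by blast
  then obtain T where T: "T \<in> X" "\<forall>x\<in>X. T = x \<or> lt T x" using least_exists[OF to XT] by blast
  then obtain f where f: "f \<in> J - I" "T = LT lt f" unfolding X_def by blast
  have fnz: "f \<noteq> 0" using nz[OF f(1)] .
  have kf: "Poly_Mapping.keys f \<subseteq> Tn n" using ideal_keys[OF J] f(1) by blast
  note LTf = LT_props[OF to fnz kf]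
  have "T \<in> LTs lt J" using f fnz unfolding LTs_def by blast
  then have "T \<in> LTs lt I" using sub by blast
  then obtain h where h: "h \<in> I" "h \<noteq> 0" "T = LT lt h" unfolding LTs_def by blast
  have kh: "Poly_Mapping.keys h \<subseteq> Tn n" using ideal_keys[OF I h(1)] .
  note LTh = LT_props[OF to h(2) kh]
  have hT: "Poly_Mapping.lookup h T \<noteq> 0" using LTh h(3) by (simp add: in_keys_iff)
  define c where "c = Poly_Mapping.lookup f T / Poly_Mapping.lookup h T"
  define p where "p = Poly_Mapping.single 0 c * h"
  define q where "q = Poly_Mapping.single 0 (-1) * p"
  define g where "g = f + q"
  have pI: "p \<in> I" unfolding p_def by (rule ideal_mult[OF I h(1) single_Pn[OF zero_Tn]])
  have qI: "q \<in> I" unfolding q_def by (rule ideal_mult[OF I pI single_Pn[OF zero_Tn]])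
  have gJ: "g \<in> J" unfolding g_def using ideal_add[OF J] f(1) qI IJ by blast
  have lg: "Poly_Mapping.lookup g s = Poly_Mapping.lookup f s - c * Poly_Mapping.lookup h s" for s
    unfolding g_def q_def p_def by (simp add: lookup_add lookup_scalar)
  have "g + p = f"
    by (rule poly_mapping_eqI) (simp add: lookup_add lg p_def lookup_scalar)
  then have gnI: "g \<notin> I" using ideal_add[OF I _ pI] f(1) by force
  then have gX: "LT lt g \<in> X" unfolding X_def using gJ by blast
  have gnz: "g \<noteq> 0" using gnI ideal_zero[OF I] by auto
  have kg: "Poly_Mapping.keys g \<subseteq> Tn n" using ideal_keys[OF J gJ] .
  note LTg = LT_props[OF to gnz kg]
  define s where "s = LT lt g"
  have gs: "Poly_Mapping.lookup g s \<noteq> 0" using LTg unfolding s_def by (simp add: in_keys_iff)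
  have "Poly_Mapping.lookup g T = 0" using hT unfolding lg c_def by simp
  then have sT: "s \<noteq> T" using gs by auto
  have "s \<in> Poly_Mapping.keys f \<or> s \<in> Poly_Mapping.keys h"
    using gs lg[of s] by (auto simp: in_keys_iff)
  then have "s = T \<or> lt s T" using LTf LTh f(2) h(3) by auto
  then have "lt s T" using sT by simp
  moreover have "T = s \<or> lt T s" using T(2) gX unfolding s_def by blast
  ultimately show False using sT to_trans[OF to, of s T s] to_irrefl[OF to, of s] by blast
qed


lemma sorted_exists:
  assumes to: "term_ordering n lt"
  shows "finite S \<Longrightarrow> S \<subseteq> Tn n \<Longrightarrow> \<exists>xs. sorted_wrt lt xs \<and> set xs = S"
proof (induction S rule: finite_psubset_induct)
  case (psubset S)
  show ?case
  proof (cases "S = {}")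
    case False
    then obtain m where m: "m \<in> S" "\<forall>s\<in>S. s = m \<or> lt m s"
      using finite_min[OF to psubset.hyps(1) _ psubset.prems] by blast
    have "S - {m} \<subset> S" using m(1) by auto
    then obtain xs where xs: "sorted_wrt lt xs" "set xs = S - {m}"
      using psubset.IH[of "S - {m}"] psubset.prems by blast
    have "sorted_wrt lt (m # xs)" using xs m(2) by auto
    moreover have "set (m # xs) = S" using xs m(1) by auto
    ultimately show ?thesis by blast
  qed auto
qed

lemma sorted_unique:
  assumes to: "term_ordering n lt"
  shows "sorted_wrt lt xs \<Longrightarrow> sorted_wrt lt ys \<Longrightarrow> set xs = set ys \<Longrightarrow> xs = ys"
proof (induction xs arbitrary: ys)
  case Nil then show ?case by simp
next
  case (Cons x xs)
  then obtain y ys' where ys: "ys = y # ys'" by (cases ys) auto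
  have xy: "x = y"
  proof (rule ccontr)
    assume ne: "x \<noteq> y"
    then have "y \<in> set xs" "x \<in> set ys'" using Cons.prems(3) ys by (auto simp: set_eq_iff)
    then have "lt x y" "lt y x" using Cons.prems(1,2) ys by auto
    then show False using to_trans[OF to, of x y x] to_irrefl[OF to, of x] by blast
  qed
  have "x \<notin> set xs" using Cons.prems(1) to_irrefl[OF to, of x] by auto
  moreover have "y \<notin> set ys'" using Cons.prems(2) ys to_irrefl[OF to, of y] by auto
  ultimately have "set xs = set ys'" using Cons.prems(3) ys xy by auto
  then have "xs = ys'" using Cons.IH Cons.prems ys by auto
  then show ?case using xy ys by simp
qed

lemma min_gens_eq: "min_gens lt I = {t\<in>LTs lt I. \<forall>s\<in>LTs lt I. pp_dvd s t \<longrightarrow> s = t}"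
  unfolding min_gens_def by simp

lemma O_sigma_char:
  assumes to: "term_ordering n lt" and I: "is_ideal n I"
  shows "sorted_wrt lt (O_sigma lt I) \<and> set (O_sigma lt I) = min_gens lt I"
proof -
  have T: "LTs lt I \<subseteq> Tn n" by (rule LTs_Tn[OF to I])
  have fin: "finite (min_gens lt I)" unfolding min_gens_eq by (rule mins_finite[OF T])
  have sub: "min_gens lt I \<subseteq> Tn n" using T unfolding min_gens_def by auto
  obtain xs where xs: "sorted_wrt lt xs" "set xs = min_gens lt I"
    using sorted_exists[OF to fin sub] by blast
  have "O_sigma lt I = xs" unfolding O_sigma_def
  proof (rule the_equality)
    fix ys assume "sorted_wrt lt ys \<and> set ys = min_gens lt I"
    then show "ys = xs" using sorted_unique[OF to] xs by metis
  qed (use xs in simp)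
  then show ?thesis using xs by simp
qed

lemma takeWhile_set:
  assumes to: "term_ordering n lt"
  shows "sorted_wrt lt xs \<Longrightarrow> set (takeWhile (\<lambda>g. lt g t) xs) = {g\<in>set xs. lt g t}"
proof (induction xs)
  case Nil then show ?case by simp
next
  case (Cons x xs)
  show ?case
  proof (cases "lt x t")
    case True then show ?thesis using Cons by auto
  next
    case False
    have "\<not> lt g t" if "g \<in> set xs" for g
    proof
      assume "lt g t"
      moreover have "lt x g" using Cons.prems that by auto
      ultimately show False using to_trans[OF to, of x g t] False by blast
    qed
    then show ?thesis using False by auto
  qed
qed


lemma dvd_decomp: "pp_dvd s t \<Longrightarrow> t = (t - s) + s"
  by (rule poly_mapping_eqI) (simp add: lookup_add lookup_minus pp_dvd_def)

lemma minus_Tn: "t \<in> Tn n \<Longrightarrow> t - s \<in> Tn n"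
proof -
  assume t: "t \<in> Tn n"
  have "Poly_Mapping.keys (t - s) \<subseteq> Poly_Mapping.keys t"
    by (auto simp: in_keys_iff lookup_minus)
  then show ?thesis using t unfolding Tn_def by auto
qed

theorem corollary4p9:
  fixes n :: nat and lt :: "pp \<Rightarrow> pp \<Rightarrow> bool"
    and I J :: "('a::field) mpoly set"
  assumes "term_ordering n lt"
    and "is_ideal n I" and "is_ideal n J"
    and "I \<subset> J"
  shows "tuple_prec lt (O_sigma lt J) (O_sigma lt I)"
proof -
  note to = assms(1) and I = assms(2) and J = assms(3) and IJ = assms(4)
  define A where "A = LTs lt I"
  define B where "B = LTs lt J"
  define GA where "GA = min_gens lt I"
  define GB where "GB = min_gens lt J"
  have AT: "A \<subseteq> Tn n" unfolding A_def by (rule LTs_Tn[OF to I])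
  have BT: "B \<subseteq> Tn n" unfolding B_def by (rule LTs_Tn[OF to J])
  have AB: "A \<subseteq> B" using IJ unfolding A_def B_def LTs_def by blast
  have GA: "GA = {t\<in>A. \<forall>s\<in>A. pp_dvd s t \<longrightarrow> s = t}" unfolding GA_def A_def min_gens_def by simp
  have GB: "GB = {t\<in>B. \<forall>s\<in>B. pp_dvd s t \<longrightarrow> s = t}" unfolding GB_def B_def min_gens_def by simp
  obtain b where b: "b \<in> B" "b \<notin> A" using LTs_strict[OF to I J IJ] unfolding A_def B_def by blast
  obtain m where m: "m \<in> B" "pp_dvd m b" "\<forall>s\<in>B. pp_dvd s m \<longrightarrow> s = m"
    using min_below[OF BT b(1)] by blast
  have "m \<notin> A"
  proof
    assume "m \<in> A"
    then have "(b - m) + m \<in> A" unfolding A_def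
      using LTs_closed[OF to I _ minus_Tn] b(1) BT by blast
    then show False using dvd_decomp[OF m(2)] b(2) by simp
  qed
  then have "m \<in> GB - A" using m GB by auto
  moreover have "finite (GB - A)" using mins_finite[OF BT] GB by simp
  moreover have "GB - A \<subseteq> Tn n" using BT GB by auto
  ultimately obtain t where t: "t \<in> GB - A" "\<forall>s\<in>GB - A. s = t \<or> lt t s"
    using finite_min[OF to, of "GB - A"] by blast
  have tT: "t \<in> Tn n" using t(1) GB BT by auto
  have notlt: "\<not> lt g t" if "g \<in> GB - A" for g
  proof
    assume "lt g t"
    moreover have "g = t \<or> lt t g" using t(2) that by blast
    ultimately show False using to_irrefl[OF to, of t] to_trans[OF to, of g t g] to_irrefl[OF to, of g] by blast
  qed
  have c1: "g \<in> GB" if g: "g \<in> GA" "lt g t" for g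
  proof -
    have gA: "g \<in> A" using g GA by auto
    then have gB: "g \<in> B" using AB by auto
    obtain g' where g': "g' \<in> B" "pp_dvd g' g" "\<forall>s\<in>B. pp_dvd s g' \<longrightarrow> s = g'"
      using min_below[OF BT gB] by blast
    have g'GB: "g' \<in> GB" using g' GB by auto
    have "g' = g \<or> lt g' g" using dvd_le[OF to _ _ g'(2)] g'(1) gB BT by auto
    then have "lt g' t" using g(2) to_trans[OF to, of g' g t] by blast
    then have "g' \<in> A" using notlt g'GB by blast
    then have "g' = g" using g(1) g'(2) GA by auto
    then show ?thesis using g'GB by simp
  qed
  have c2: "g \<in> GA" if g: "g \<in> GB" "lt g t" for g
  proof -
    have gA: "g \<in> A" using notlt g by blast
    obtain g' where g': "g' \<in> A" "pp_dvd g' g" "\<forall>s\<in>A. pp_dvd s g' \<longrightarrow> s = g'"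
      using min_below[OF AT gA] by blast
    have g'GA: "g' \<in> GA" using g' GA by auto
    have "g' = g \<or> lt g' g" using dvd_le[OF to _ _ g'(2)] g'(1) gA AT by auto
    then have "lt g' t" using g(2) to_trans[OF to, of g' g t] by blast
    then have "g' \<in> GB" using c1 g'GA by blast
    then have "g' = g" using g(1) g'(2) GB by auto
    then show ?thesis using g'GA by simp
  qed
  define LA where "LA = O_sigma lt I"
  define LB where "LB = O_sigma lt J"
  have LA: "sorted_wrt lt LA" "set LA = GA" using O_sigma_char[OF to I] unfolding LA_def GA_def by auto
  have LB: "sorted_wrt lt LB" "set LB = GB" using O_sigma_char[OF to J] unfolding LB_def GB_def by auto
  define P where "P = (\<lambda>g. lt g t)"
  define pA where "pA = takeWhile P LA"
  define pB where "pB = takeWhile P LB"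
  define dA where "dA = dropWhile P LA"
  define dB where "dB = dropWhile P LB"
  have LAe: "LA = pA @ dA" unfolding pA_def dA_def by simp
  have LBe: "LB = pB @ dB" unfolding pB_def dB_def by simp
  have spA: "sorted_wrt lt pA" "sorted_wrt lt dA" using LA(1) LAe sorted_wrt_append by metis+
  have spB: "sorted_wrt lt pB" "sorted_wrt lt dB" using LB(1) LBe sorted_wrt_append by metis+
  have "set pA = {g\<in>GA. lt g t}" unfolding pA_def P_def using takeWhile_set[OF to LA(1)] LA(2) by simp
  moreover have "set pB = {g\<in>GB. lt g t}" unfolding pB_def P_def using takeWhile_set[OF to LB(1)] LB(2) by simp
  ultimately have "set pA = set pB" using c1 c2 by blast
  then have pAB: "pA = pB" using sorted_unique[OF to spA(1) spB(1)] by simp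
  have "t \<notin> set pB" unfolding pB_def P_def using to_irrefl[OF to, of t] by (auto dest: set_takeWhileD)
  moreover have "t \<in> set LB" using LB(2) t(1) by auto
  ultimately have "t \<in> set dB" using LBe by auto
  then obtain h r where hr: "dB = h # r" by (cases dB) auto
  have "\<not> P h" using hr unfolding dB_def
    by (metis dropWhile_eq_Cons_conv)
  have "h = t"
  proof (rule ccontr)
    assume "h \<noteq> t"
    then have "t \<in> set r" using \<open>t \<in> set dB\<close> hr by auto
    then have "lt h t" using spB(2) hr by auto
    then show False using \<open>\<not> P h\<close> P_def by simp
  qed
  then have LBf: "LB = pA @ t # r" using LBe hr pAB by simp
  show ?thesis
  proof (cases dA)
    case Nil
    then have "LA = pA" using LAe by simp
    then show ?thesis unfolding tuple_prec_def LA_def[symmetric] LB_def[symmetric] using LBf by simp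
  next
    case (Cons a r')
    have "\<not> P a" using Cons unfolding dA_def by (metis dropWhile_eq_Cons_conv)
    have aGA: "a \<in> GA" using LA(2) LAe Cons by auto
    have "a \<noteq> t" using aGA t(1) GA by auto
    moreover have "a \<in> Tn n" using aGA GA AT by auto
    ultimately have "lt t a" using to_total[OF to tT] \<open>\<not> P a\<close> P_def by blast
    then have "length pA < min (length LA) (length LB) \<and> take (length pA) LB = take (length pA) LA
        \<and> lt (LB ! length pA) (LA ! length pA)"
      using LBf LAe Cons by simp
    then show ?thesis unfolding tuple_prec_def LA_def[symmetric] LB_def[symmetric] by blast
  qed
qed

end
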